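(* For $n \ge 0$ let $d(n) = \sum_{k \ge 0} w(n-k,k)$ (with $w(m,k)=0$ for $m<0$). Then: (i) $d(n) = c_{ie}(n)$ for all $n \ge 0$; (ii) $\displaystyle\sum_{n \ge 0} d(n) q^n = \frac{1-q^2+q^3}{1 - q - 2 q^2 + 2 q^3}$; (iii) for $n \ge 1$, $d(n) = 2^m - 1$ if $n = 2m-1$, and $d(n) = 3\cdot 2^{m-1} - 1$ if $n = 2m$.
   Context: A composition of $n \ge 0$ is a finite sequence $(c_1,\dots,c_t)$ of positive integers with $c_1+\cdots+c_t=n$; the empty composition is the unique composition of $0$. Let $C_{12}(n)$ be the set of compositions of $n$ all of whose parts lie in $\{1,2\}$. The number of water cells of a composition $(c_1,\dots,c_t)$ is $\sum_{i=1}^{t} \max\bigl(0, \min(\max_{j \le i} c_j, \max_{j \ge i} c_j) - c_i\bigr)$ (the number of unit squares that would hold water poured over its bargraph, in which column $i$ has height $c_i$). For $n,k \ge 0$, $W(n,k)$ is the set of compositions in $C_{12}(n)$ with exactly $k$ water cells and $w(n,k)=|W(n,k)|$. $C_{ie}(n)$ is the set of compositions $(c_1,\dots,c_t)$ of $n$ such that every internal part $c_2,\dots,c_{t-1}$ is even (so all compositions with $t \le 2$ are included, including the empty composition when $n=0$), and $c_{ie}(n)=|C_{ie}(n)|$. *)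

theory Defs
  imports "HOL-Computational_Algebra.Formal_Power_Series"
begin

definition C12 :: "nat \<Rightarrow> nat list set" where
  "C12 n = {cs. sum_list cs = n \<and> set cs \<subseteq> {1, 2}}"

text \<open>Number of water cells: column i holds
  max 0 (min (max of prefix up to i) (max of suffix from i) - c_i).\<close>
definition water :: "nat list \<Rightarrow> nat" where
  "water cs = (\<Sum>i<length cs.
      min (Max (set (take (Suc i) cs))) (Max (set (drop i cs))) - cs ! i)"

definition W :: "nat \<Rightarrow> nat \<Rightarrow> nat list set" where
  "W n k = {cs \<in> C12 n. water cs = k}"

definition w :: "nat \<Rightarrow> nat \<Rightarrow> nat" where
  "w n k = card (W n k)"

text \<open>d(n) = sum over k \<ge> 0 of w(n-k,k); terms with k > n vanish.\<close>
definition d :: "nat \<Rightarrow> nat" where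
  "d n = (\<Sum>k\<le>n. w (n - k) k)"

definition C_ie :: "nat \<Rightarrow> nat list set" where
  "C_ie n = {cs. (\<forall>c\<in>set cs. 0 < c) \<and> sum_list cs = n \<and>
              (\<forall>i. 0 < i \<and> i < length cs - 1 \<longrightarrow> even (cs ! i))}"

definition c_ie :: "nat \<Rightarrow> nat" where
  "c_ie n = card (C_ie n)"

end

theory Submission imports Defs begin

definition wgen :: "nat \<Rightarrow> nat list \<Rightarrow> nat" where
  "wgen p cs = (\<Sum>i<length cs.
      min (max p (Max (set (take (Suc i) cs)))) (Max (set (drop i cs))) - cs ! i)"

lemma water_wgen: "water cs = wgen 0 cs"
  unfolding water_def wgen_def by simp

lemma wgen_Nil[simp]: "wgen p [] = 0" by (simp add: wgen_def)

lemma wgen_Cons: "wgen p (x#cs) = (min (max p x) (Max (set (x#cs))) - x) + wgen (max p x) cs"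
proof -
  have "wgen p (x#cs) = (min (max p x) (Max (set (x#cs))) - x) +
     (\<Sum>i<length cs. min (max p (Max (set (take (Suc (Suc i)) (x#cs))))) (Max (set (drop (Suc i) (x#cs)))) - (x#cs) ! Suc i)"
    unfolding wgen_def length_Cons sum.lessThan_Suc_shift by simp
  also have "(\<Sum>i<length cs. min (max p (Max (set (take (Suc (Suc i)) (x#cs))))) (Max (set (drop (Suc i) (x#cs)))) - (x#cs) ! Suc i)
      = wgen (max p x) cs"
    unfolding wgen_def
  proof (rule sum.cong[OF refl])
    fix i assume "i \<in> {..<length cs}"
    then have ne: "take (Suc i) cs \<noteq> []" by (cases cs) auto
    have "Max (set (take (Suc (Suc i)) (x#cs))) = max x (Max (set (take (Suc i) cs)))"
      using ne by (simp add: Max_insert)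
    then show "min (max p (Max (set (take (Suc (Suc i)) (x#cs))))) (Max (set (drop (Suc i) (x#cs)))) - (x#cs) ! Suc i
       = min (max (max p x) (Max (set (take (Suc i) cs)))) (Max (set (drop i cs))) - cs ! i"
      by (simp add: max.assoc)
  qed
  finally show ?thesis .
qed

fun wh :: "nat list \<Rightarrow> nat" where
  "wh [] = 0"
| "wh (x#cs) = (if x = 1 \<and> 2 \<in> set cs then 1 else 0) + wh cs"

fun wl :: "nat list \<Rightarrow> nat" where
  "wl [] = 0"
| "wl (x#cs) = (if x = 2 then wh cs else wl cs)"

lemma Max12: "set (cs::nat list) \<subseteq> {1,2} \<Longrightarrow> x \<in> {1,2} \<Longrightarrow> Max (insert x (set cs)) = (if x = 2 \<or> 2 \<in> set cs then 2 else 1)"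
proof -
  assume a: "set cs \<subseteq> {1,2}" "x \<in> {1,2}"
  have "insert x (set cs) \<subseteq> {1,2}" using a by auto
  then have le: "Max (insert x (set cs)) \<le> 2" by (auto simp add: Max_le_iff)
  show ?thesis
  proof (cases "x = 2 \<or> 2 \<in> set cs")
    case True
    then have ge: "2 \<le> Max (insert x (set cs))" by (auto intro: Max_ge)
    have "Max (insert x (set cs)) = 2" using le ge by (rule antisym)
    then show ?thesis using True by simp
  next
    case False
    have eq: "insert x (set cs) = {1}" using a False by auto
    show ?thesis unfolding eq using False by simp
  qed
qed

lemma wgen_hi: "set cs \<subseteq> {1,2} \<Longrightarrow> wgen 2 cs = wh cs"
proof (induction cs)
  case (Cons x cs)
  then have x: "x \<in> {1,2}" and cs: "set cs \<subseteq> {1,2}" by auto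
  show ?case using x Cons.IH[OF cs] by (auto simp: wgen_Cons Max12[OF cs x] max_def)
qed simp

lemma wgen_lo: "set cs \<subseteq> {1,2} \<Longrightarrow> p \<le> 1 \<Longrightarrow> wgen p cs = wl cs"
proof (induction cs arbitrary: p)
  case (Cons x cs)
  then have x: "x \<in> {1,2}" and cs: "set cs \<subseteq> {1,2}" by auto
  show ?case using x Cons.IH[OF cs] Cons.prems wgen_hi[OF cs] by (auto simp: wgen_Cons Max12[OF cs x] max_def)
qed simp


lemma len_le_sum12: "set (xs::nat list) \<subseteq> {1,2} \<Longrightarrow> length xs \<le> sum_list xs"
  by (induction xs) auto

lemma fin12: "finite {xs::nat list. set xs \<subseteq> {1,2} \<and> sum_list xs \<le> n}"
proof (rule finite_subset[OF _ finite_lists_length_le[of "{1,2::nat}" n]])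
  show "{xs::nat list. set xs \<subseteq> {1,2} \<and> sum_list xs \<le> n} \<subseteq> {xs. set xs \<subseteq> {1,2} \<and> length xs \<le> n}"
  proof
    fix xs :: "nat list" assume "xs \<in> {xs::nat list. set xs \<subseteq> {1,2} \<and> sum_list xs \<le> n}"
    then show "xs \<in> {xs. set xs \<subseteq> {1,2} \<and> length xs \<le> n}" using len_le_sum12[of xs] by auto
  qed
qed simp

lemma sum0_12: "set (xs::nat list) \<subseteq> {Suc 0,2} \<Longrightarrow> \<forall>n\<in>set xs. n = 0 \<Longrightarrow> xs = []"
  by (cases xs) auto

definition D :: "nat \<Rightarrow> nat list set" where
  "D n = {cs. set cs \<subseteq> {1,2} \<and> sum_list cs + wl cs = n}"
definition H :: "nat \<Rightarrow> nat list set" where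
  "H n = {cs. set cs \<subseteq> {1,2} \<and> sum_list cs + wh cs = n}"

lemma finD: "finite (D n)"
  by (rule finite_subset[OF _ fin12[of n]]) (auto simp: D_def)
lemma finH: "finite (H n)"
  by (rule finite_subset[OF _ fin12[of n]]) (auto simp: H_def)

lemma water_wl: "set cs \<subseteq> {1,2} \<Longrightarrow> water cs = wl cs"
  by (simp add: water_wgen wgen_lo)

lemma d_card: "d n = card (D n)"
proof -
  have eq: "D n = (\<Union>k\<in>{..n}. W (n-k) k)"
  proof
    show "D n \<subseteq> (\<Union>k\<in>{..n}. W (n-k) k)"
    proof
      fix cs assume "cs \<in> D n"
      then have a: "set cs \<subseteq> {1,2}" "sum_list cs + wl cs = n" by (auto simp: D_def)
      then have "cs \<in> W (n - wl cs) (wl cs)" by (auto simp: W_def C12_def water_wl)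
      then show "cs \<in> (\<Union>k\<in>{..n}. W (n-k) k)" using a by auto
    qed
  next
    show "(\<Union>k\<in>{..n}. W (n-k) k) \<subseteq> D n"
    proof
      fix cs assume "cs \<in> (\<Union>k\<in>{..n}. W (n-k) k)"
      then obtain k where "k \<le> n" "cs \<in> W (n-k) k" by auto
      then show "cs \<in> D n" by (auto simp: W_def C12_def D_def water_wl)
    qed
  qed
  have fin: "\<And>k. finite (W (n-k) k)"
  proof -
    fix k
    have "W (n-k) k \<subseteq> C12 (n-k)" by (auto simp: W_def)
    also have "C12 (n-k) \<subseteq> {xs::nat list. set xs \<subseteq> {1,2} \<and> sum_list xs \<le> n-k}" by (auto simp: C12_def)
    finally show "finite (W (n-k) k)" using fin12 finite_subset by blast
  qed
  have "card (D n) = (\<Sum>k\<in>{..n}. card (W (n-k) k))"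
    unfolding eq using fin by (intro card_UN_disjoint) (auto simp: W_def)
  then show ?thesis by (simp add: d_def w_def)
qed

lemma wh_no2: "2 \<notin> set cs \<Longrightarrow> wh cs = 0"
  by (induction cs) auto

lemma only1: "set (cs::nat list) \<subseteq> {1,2} \<Longrightarrow> 2 \<notin> set cs \<Longrightarrow> cs = replicate (sum_list cs) 1"
  by (induction cs) auto

lemma inj_Cons: "inj_on (Cons x) A" by (rule inj_onI) simp

lemma card_Cons: "card (Cons x ` A) = card A"
  by (rule card_image[OF inj_Cons])

lemma H_split: "H m = {cs \<in> H m. 2 \<in> set cs} \<union> {replicate m 1}"
proof -
  have "replicate m 1 \<in> H m" by (auto simp: H_def wh_no2 sum_list_replicate)
  moreover have "\<And>cs. cs \<in> H m \<Longrightarrow> 2 \<notin> set cs \<Longrightarrow> cs = replicate m 1"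
  proof -
    fix cs assume a: "cs \<in> H m" "2 \<notin> set cs"
    then have "set cs \<subseteq> {1,2}" "sum_list cs = m" by (auto simp: H_def wh_no2)
    then show "cs = replicate m 1" using only1 a(2) by metis
  qed
  ultimately show ?thesis by blast
qed

lemma card_H_split: "card (H m) = card {cs \<in> H m. 2 \<in> set cs} + 1"
proof -
  have "card (H m) = card ({cs \<in> H m. 2 \<in> set cs} \<union> {replicate m 1})"
    using H_split by metis
  also have "\<dots> = card {cs \<in> H m. 2 \<in> set cs} + 1"
    by (subst card_Un_disjoint) (auto intro: finite_subset[OF _ finH[of m]])
  finally show ?thesis .
qed

lemma H_step: "H (m+2) = Cons 2 ` H m \<union> Cons 1 ` ({cs \<in> H m. 2 \<in> set cs} \<union> {replicate (m+1) 1})"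
proof
  show "H (m+2) \<subseteq> Cons 2 ` H m \<union> Cons 1 ` ({cs \<in> H m. 2 \<in> set cs} \<union> {replicate (m+1) 1})"
  proof
    fix cs assume cs: "cs \<in> H (m+2)"
    then obtain x r where xr: "cs = x # r" by (cases cs) (auto simp: H_def)
    have r: "set r \<subseteq> {1,2}" and x: "x \<in> {1,2}" and s: "x + sum_list r + wh (x#r) = m + 2"
      using cs xr by (auto simp: H_def)
    show "cs \<in> Cons 2 ` H m \<union> Cons 1 ` ({cs \<in> H m. 2 \<in> set cs} \<union> {replicate (m+1) 1})"
    proof (cases "x = 2")
      case True then show ?thesis using xr r s by (auto simp: H_def)
    next
      case False
      then have x1: "x = 1" using x by auto
      show ?thesis
      proof (cases "2 \<in> set r")
        case True then show ?thesis using xr r s x1 by (auto simp: H_def)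
      next
        case False
        then have "r = replicate (sum_list r) 1" using only1 r by blast
        moreover have "sum_list r = m + 1" using s x1 False wh_no2[OF False] by simp
        ultimately show ?thesis using xr x1 by auto
      qed
    qed
  qed
next
  show "Cons 2 ` H m \<union> Cons 1 ` ({cs \<in> H m. 2 \<in> set cs} \<union> {replicate (m+1) 1}) \<subseteq> H (m+2)"
    by (auto simp: H_def wh_no2 sum_list_replicate)
qed

lemma card_H_step: "card (H (m+2)) = 2 * card (H m)"
proof -
  have f1: "finite {cs \<in> H m. 2 \<in> set cs}" by (rule finite_subset[OF _ finH[of m]]) auto
  have "card (H (m+2)) = card (Cons 2 ` H m) + card (Cons 1 ` ({cs \<in> H m. 2 \<in> set cs} \<union> {replicate (m+1) 1}))"
    unfolding H_step by (rule card_Un_disjoint) (auto simp: finH f1)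
  also have "\<dots> = card (H m) + card ({cs \<in> H m. 2 \<in> set cs} \<union> {replicate (m+1) 1})"
    by (simp only: card_Cons)
  also have "card ({cs \<in> H m. 2 \<in> set cs} \<union> {replicate (m+1) 1}) = card {cs \<in> H m. 2 \<in> set cs} + 1"
    by (subst card_Un_disjoint) (auto simp: f1)
  finally show ?thesis using card_H_split[of m] by simp
qed

lemma H0: "H 0 = {[]}"
  by (auto simp: H_def dest: sum0_12)

lemma H1: "H 1 = {[1]}"
proof -
  have "\<And>cs. cs \<in> H 1 \<Longrightarrow> cs = [1]"
  proof -
    fix cs assume "cs \<in> H 1"
    then show "cs = [1]" by (cases cs) (auto simp: H_def dest: sum0_12)
  qed
  then show ?thesis by (auto simp: H_def)
qed

lemma card_H: "card (H m) = 2 ^ (m div 2)"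
proof (induction m rule: nat_less_induct)
  case (1 m)
  show ?case
  proof (cases "m < 2")
    case True
    then have "m = 0 \<or> m = 1" by auto
    then show ?thesis by (auto simp: H0 H1[simplified])
  next
    case False
    then obtain k where k: "m = k + 2" by (metis add.commute le_Suc_ex not_less)
    then show ?thesis using 1 card_H_step[of k] by simp
  qed
qed

lemma D0: "D 0 = {[]}" by (auto simp: D_def dest: sum0_12)
lemma D1: "D 1 = {[1]}"
proof -
  have "\<And>cs. cs \<in> D 1 \<Longrightarrow> cs = [1]"
  proof -
    fix cs assume "cs \<in> D 1"
    then show "cs = [1]" by (cases cs) (auto simp: D_def dest: sum0_12 split: if_splits)
  qed
  then show ?thesis by (auto simp: D_def)
qed

lemma D_step: "D (n+2) = Cons 1 ` D (n+1) \<union> Cons 2 ` H n"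
proof
  show "D (n+2) \<subseteq> Cons 1 ` D (n+1) \<union> Cons 2 ` H n"
  proof
    fix cs assume cs: "cs \<in> D (n+2)"
    then obtain x r where xr: "cs = x # r" by (cases cs) (auto simp: D_def)
    then show "cs \<in> Cons 1 ` D (n+1) \<union> Cons 2 ` H n"
      using cs by (auto simp: D_def H_def split: if_splits)
  qed
next
  show "Cons 1 ` D (n+1) \<union> Cons 2 ` H n \<subseteq> D (n+2)"
    by (auto simp: D_def H_def)
qed

lemma d_step: "d (n+2) = d (n+1) + 2 ^ (n div 2)"
proof -
  have "card (D (n+2)) = card (Cons 1 ` D (n+1)) + card (Cons 2 ` H n)"
    unfolding D_step by (rule card_Un_disjoint) (auto simp: finD finH)
  then show ?thesis by (simp add: d_card card_Cons card_H)
qed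

lemma d0: "d 0 = 1" by (simp add: d_card D0)
lemma d1: "d 1 = 1" by (simp add: d_card D1[simplified])


fun le :: "nat list \<Rightarrow> bool" where
  "le [] = True"
| "le [x] = True"
| "le (x#y#r) = (even x \<and> le (y#r))"

lemma le_iff: "le xs = (\<forall>i. i < length xs - 1 \<longrightarrow> even (xs!i))"
proof (induction xs rule: le.induct)
  case (3 x y r)
  show ?case
  proof
    assume "le (x#y#r)"
    then show "\<forall>i. i < length (x#y#r) - 1 \<longrightarrow> even ((x#y#r)!i)"
      using 3 by (auto simp: nth_Cons split: nat.splits)
  next
    assume a: "\<forall>i. i < length (x#y#r) - 1 \<longrightarrow> even ((x#y#r)!i)"
    have "even x" using a[rule_format, of 0] by simp
    moreover have "\<forall>i. i < length (y#r) - 1 \<longrightarrow> even ((y#r)!i)"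
      using a by (auto dest: spec[of _ "Suc _"])
    ultimately show "le (x#y#r)" using 3 by simp
  qed
qed auto

lemma ie_iff: "(\<forall>i. 0 < i \<and> i < length (x#xs) - 1 \<longrightarrow> even ((x#xs)!i)) = le xs"
proof -
  have "(\<forall>i. 0 < i \<and> i < length (x#xs) - 1 \<longrightarrow> even ((x#xs)!i)) =
        (\<forall>j. j < length xs - 1 \<longrightarrow> even (xs!j))"
  proof
    assume a: "\<forall>i. 0 < i \<and> i < length (x#xs) - 1 \<longrightarrow> even ((x#xs)!i)"
    show "\<forall>j. j < length xs - 1 \<longrightarrow> even (xs!j)"
    proof (intro allI impI)
      fix j assume "j < length xs - 1"
      then show "even (xs!j)" using a[rule_format, of "Suc j"] by simp
    qed
  next
    assume a: "\<forall>j. j < length xs - 1 \<longrightarrow> even (xs!j)"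
    show "\<forall>i. 0 < i \<and> i < length (x#xs) - 1 \<longrightarrow> even ((x#xs)!i)"
    proof (intro allI impI)
      fix i assume "0 < i \<and> i < length (x#xs) - 1"
      then obtain j where "i = Suc j" "j < length xs - 1" by (cases i) auto
      then show "even ((x#xs)!i)" using a by simp
    qed
  qed
  then show ?thesis by (simp add: le_iff)
qed

definition CI :: "nat \<Rightarrow> nat list set" where
  "CI n = {cs. (\<forall>c\<in>set cs. 0 < c) \<and> sum_list cs = n \<and> (case cs of [] \<Rightarrow> True | x#r \<Rightarrow> le r)}"

definition L :: "nat \<Rightarrow> nat list set" where
  "L n = {cs. cs \<noteq> [] \<and> (\<forall>c\<in>set cs. 0 < c) \<and> sum_list cs = n \<and> le cs}"

lemma C_ie_CI: "C_ie n = CI n"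
proof -
  have "\<And>cs. (\<forall>i. 0 < i \<and> i < length cs - 1 \<longrightarrow> even (cs ! i)) = (case cs of [] \<Rightarrow> True | x#r \<Rightarrow> le r)"
  proof -
    fix cs :: "nat list"
    show "(\<forall>i. 0 < i \<and> i < length cs - 1 \<longrightarrow> even (cs ! i)) = (case cs of [] \<Rightarrow> True | x#r \<Rightarrow> le r)"
    proof (cases cs)
      case (Cons a r)
      show ?thesis unfolding Cons list.case by (rule ie_iff)
    qed simp
  qed
  then show ?thesis unfolding C_ie_def CI_def by simp
qed

lemma len_pos: "\<forall>c\<in>set xs. 0 < (c::nat) \<Longrightarrow> length xs \<le> sum_list xs"
  by (induction xs) auto

lemma pos_sum: "\<forall>c\<in>set cs. 0 < (c::nat) \<Longrightarrow> cs \<noteq> [] \<Longrightarrow> 0 < sum_list cs"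
  by (cases cs) auto

lemma finpos: "finite {cs::nat list. (\<forall>c\<in>set cs. 0 < c) \<and> sum_list cs = n}"
proof (rule finite_subset[OF _ finite_lists_length_le[of "{0..n}" n]])
  show "{cs::nat list. (\<forall>c\<in>set cs. 0 < c) \<and> sum_list cs = n} \<subseteq> {xs. set xs \<subseteq> {0..n} \<and> length xs \<le> n}"
  proof
    fix xs :: "nat list" assume a: "xs \<in> {cs::nat list. (\<forall>c\<in>set cs. 0 < c) \<and> sum_list cs = n}"
    have "length xs \<le> sum_list xs" using a len_pos by auto
    moreover have "set xs \<subseteq> {0..n}" using a member_le_sum_list[of _ xs] by auto
    ultimately show "xs \<in> {xs. set xs \<subseteq> {0..n} \<and> length xs \<le> n}" using a by auto
  qed
qed simp

lemma finCI: "finite (CI n)"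
  by (rule finite_subset[OF _ finpos[of n]]) (auto simp: CI_def)
lemma finL: "finite (L n)"
  by (rule finite_subset[OF _ finpos[of n]]) (auto simp: L_def)

lemma pos_sum0: "\<forall>c\<in>set cs. 0 < (c::nat) \<Longrightarrow> sum_list cs = 0 \<Longrightarrow> cs = []"
  by (cases cs) auto

fun inc :: "nat \<Rightarrow> nat list \<Rightarrow> nat list" where
  "inc a [] = []"
| "inc a (x#r) = (x + a) # r"

lemma inj_inc: "inj_on (inc a) {cs. cs \<noteq> []}"
proof (rule inj_onI)
  fix xs ys assume "xs \<in> {cs. cs \<noteq> []}" "ys \<in> {cs. cs \<noteq> []}" "inc a xs = inc a ys"
  then show "xs = ys" by (cases xs; cases ys) auto
qed

lemma card_inc: "[] \<notin> A \<Longrightarrow> card (inc a ` A) = card A"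
  by (rule card_image, rule inj_on_subset[OF inj_inc]) auto

lemma CI0: "CI 0 = {[]}" by (auto simp: CI_def dest: pos_sum0)

lemma CI_step:
  assumes n: "n \<ge> 1"
  shows "CI (n+1) = insert [n+1] (Cons 1 ` L n \<union> inc 1 ` (CI n - {[n]}))"
proof
  show "CI (n+1) \<subseteq> insert [n+1] (Cons 1 ` L n \<union> inc 1 ` (CI n - {[n]}))"
  proof
    fix cs assume cs: "cs \<in> CI (n+1)"
    then obtain x r where xr: "cs = x # r" by (cases cs) (auto simp: CI_def)
    have pos: "0 < x" "\<forall>c\<in>set r. 0 < c" and s: "x + sum_list r = n+1" and l: "le r"
      using cs xr by (auto simp: CI_def)
    show "cs \<in> insert [n+1] (Cons 1 ` L n \<union> inc 1 ` (CI n - {[n]}))"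
    proof (cases "r = []")
      case True then show ?thesis using xr s by simp
    next
      case False
      show ?thesis
      proof (cases "x = 1")
        case True
        then have "r \<in> L n" using False pos s l by (auto simp: L_def)
        then show ?thesis using xr True by auto
      next
        case x1: False
        have "(x-1)#r \<in> CI n - {[n]}" using False pos s l x1 by (auto simp: CI_def)
        moreover have "cs = inc 1 ((x-1)#r)" using xr x1 pos by simp
        ultimately show ?thesis by blast
      qed
    qed
  qed
next
  show "insert [n+1] (Cons 1 ` L n \<union> inc 1 ` (CI n - {[n]})) \<subseteq> CI (n+1)"
  proof
    fix cs assume "cs \<in> insert [n+1] (Cons 1 ` L n \<union> inc 1 ` (CI n - {[n]}))"
    then consider "cs = [n+1]" | r where "r \<in> L n" "cs = 1 # r" | ys where "ys \<in> CI n" "ys \<noteq> [n]" "cs = inc 1 ys"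
      by blast
    then show "cs \<in> CI (n+1)"
    proof cases
      case 1 then show ?thesis by (simp add: CI_def)
    next
      case 2 then show ?thesis by (auto simp: CI_def L_def)
    next
      case 3
      then obtain y r where "ys = y # r" using n by (cases ys) (auto simp: CI_def)
      then show ?thesis using 3 by (auto simp: CI_def)
    qed
  qed
qed

lemma card_CI_step:
  assumes n: "n \<ge> 1"
  shows "card (CI (n+1)) = card (CI n) + card (L n)"
proof -
  have mem: "[n] \<in> CI n" using n by (simp add: CI_def)
  have ne: "[] \<notin> CI n - {[n]}" using n by (auto simp: CI_def)
  have d1: "Cons 1 ` L n \<inter> inc 1 ` (CI n - {[n]}) = {}"
  proof (rule equals0I)
    fix z assume "z \<in> Cons 1 ` L n \<inter> inc 1 ` (CI n - {[n]})"
    then obtain r ys where "r \<in> L n" "ys \<in> CI n - {[n]}" "z = 1 # r" "z = inc 1 ys" by blast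
    then show False by (cases ys) (auto simp: CI_def)
  qed
  have n1: "[n+1] \<notin> Cons 1 ` L n \<union> inc 1 ` (CI n - {[n]})"
  proof
    assume "[n+1] \<in> Cons 1 ` L n \<union> inc 1 ` (CI n - {[n]})"
    then consider r where "r \<in> L n" "[n+1] = 1 # r" | ys where "ys \<in> CI n - {[n]}" "[n+1] = inc 1 ys" by blast
    then show False
    proof cases
      case 1 then show ?thesis by (auto simp: L_def)
    next
      case 2 then show ?thesis by (cases ys) (auto simp: CI_def)
    qed
  qed
  have "card (CI (n+1)) = Suc (card (Cons 1 ` L n \<union> inc 1 ` (CI n - {[n]})))"
    unfolding CI_step[OF n] using n1 by (simp add: finL finCI)
  also have "card (Cons 1 ` L n \<union> inc 1 ` (CI n - {[n]})) = card (L n) + card (CI n - {[n]})"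
    using d1 card_inc[OF ne] by (subst card_Un_disjoint) (simp_all add: finL finCI card_Cons)
  also have "card (CI n - {[n]}) = card (CI n) - 1" using mem finCI by simp
  finally have eq: "card (CI (n+1)) = Suc (card (L n) + (card (CI n) - 1))" .
  have "0 < card (CI n)" using mem finCI[of n] by (auto simp: card_gt_0_iff)
  then show ?thesis using eq by linarith
qed

lemma L_step:
  assumes n: "n \<ge> 1"
  shows "L (n+2) = insert [n+2] (Cons 2 ` L n \<union> inc 2 ` (L n - {[n]}))"
proof
  show "L (n+2) \<subseteq> insert [n+2] (Cons 2 ` L n \<union> inc 2 ` (L n - {[n]}))"
  proof
    fix cs assume cs: "cs \<in> L (n+2)"
    then obtain x r where xr: "cs = x # r" by (cases cs) (auto simp: L_def)
    have pos: "0 < x" "\<forall>c\<in>set r. 0 < c" and s: "x + sum_list r = n+2" and l: "le (x#r)"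
      using cs xr by (auto simp: L_def)
    show "cs \<in> insert [n+2] (Cons 2 ` L n \<union> inc 2 ` (L n - {[n]}))"
    proof (cases "r = []")
      case True then show ?thesis using xr s by simp
    next
      case False
      then obtain y r' where r': "r = y # r'" by (cases r) auto
      have ex: "even x" and lr: "le r" using l r' by auto
      show ?thesis
      proof (cases "x = 2")
        case True
        then have "r \<in> L n" using False pos s lr by (auto simp: L_def)
        then show ?thesis using xr True by auto
      next
        case x2: False
        then have x4: "x \<ge> 4" using ex pos(1) by presburger
        have "(x-2)#r \<in> L n - {[n]}" using False pos s lr x4 ex r' by (auto simp: L_def)
        moreover have "cs = inc 2 ((x-2)#r)" using xr x4 by simp
        ultimately show ?thesis by blast
      qed
    qed
  qed
next
  show "insert [n+2] (Cons 2 ` L n \<union> inc 2 ` (L n - {[n]})) \<subseteq> L (n+2)"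
  proof
    fix cs assume "cs \<in> insert [n+2] (Cons 2 ` L n \<union> inc 2 ` (L n - {[n]}))"
    then consider "cs = [n+2]" | r where "r \<in> L n" "cs = 2 # r" | ys where "ys \<in> L n" "ys \<noteq> [n]" "cs = inc 2 ys"
      by blast
    then show "cs \<in> L (n+2)"
    proof cases
      case 1 then show ?thesis by (simp add: L_def)
    next
      case 2
      then obtain y r' where "r = y # r'" by (cases r) (auto simp: L_def)
      then show ?thesis using 2 by (auto simp: L_def)
    next
      case 3
      then obtain y r where yr: "ys = y # r" by (cases ys) (auto simp: L_def)
      then have "r \<noteq> []" using 3 by (auto simp: L_def)
      then obtain z r' where "r = z # r'" by (cases r) auto
      then show ?thesis using 3 yr by (auto simp: L_def)
    qed
  qed
qed

lemma card_L_step: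
  assumes n: "n \<ge> 1"
  shows "card (L (n+2)) = 2 * card (L n)"
proof -
  have mem: "[n] \<in> L n" using n by (simp add: L_def)
  have ne: "[] \<notin> L n - {[n]}" by (auto simp: L_def)
  have d1: "Cons 2 ` L n \<inter> inc 2 ` (L n - {[n]}) = {}"
  proof -
    { fix r ys assume "r \<in> L n" "ys \<in> L n - {[n]}" "2 # r = inc 2 ys"
      then have False by (cases ys) (auto simp: L_def) }
    then show ?thesis by blast
  qed
  have n1: "[n+2] \<notin> Cons 2 ` L n \<union> inc 2 ` (L n - {[n]})"
  proof
    assume "[n+2] \<in> Cons 2 ` L n \<union> inc 2 ` (L n - {[n]})"
    then consider r where "r \<in> L n" "[n+2] = 2 # r" | ys where "ys \<in> L n - {[n]}" "[n+2] = inc 2 ys" by blast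
    then show False
    proof cases
      case 1 then show ?thesis by (auto simp: L_def)
    next
      case 2 then show ?thesis by (cases ys) (auto simp: L_def)
    qed
  qed
  have "card (L (n+2)) = Suc (card (Cons 2 ` L n \<union> inc 2 ` (L n - {[n]})))"
    unfolding L_step[OF n] using n1 by (simp add: finL)
  also have "card (Cons 2 ` L n \<union> inc 2 ` (L n - {[n]})) = card (L n) + card (L n - {[n]})"
    by (subst card_Un_disjoint) (simp_all add: finL d1 card_Cons card_inc[OF ne])
  also have "card (L n - {[n]}) = card (L n) - 1" using mem finL by simp
  finally have eq: "card (L (n+2)) = Suc (card (L n) + (card (L n) - 1))" .
  have "0 < card (L n)" using mem finL[of n] by (auto simp: card_gt_0_iff)
  then show ?thesis using eq by linarith
qed

lemma L1: "L 1 = {[1]}"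
proof -
  { fix cs assume "cs \<in> L 1"
    then obtain x r where "cs = x # r" "0 < x" "\<forall>c\<in>set r. 0 < c" "x + sum_list r = 1"
      by (cases cs) (auto simp: L_def)
    then have "cs = [1]" using pos_sum[of r] by fastforce }
  then show ?thesis by (auto simp: L_def)
qed

lemma L2: "L 2 = {[2]}"
proof -
  { fix cs assume cs: "cs \<in> L 2"
    then obtain x r where xr: "cs = x # r" "0 < x" "\<forall>c\<in>set r. 0 < c" "x + sum_list r = 2" "le (x#r)"
      by (cases cs) (auto simp: L_def)
    have "cs = [2]"
    proof (cases r)
      case Nil then show ?thesis using xr by simp
    next
      case (Cons y r')
      then have "even x" "0 < y" "y \<le> sum_list r" using xr member_le_sum_list[of y r] by auto
      have "x \<ge> 2" using \<open>even x\<close> \<open>0 < x\<close> by presburger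
      then have False using xr(4) \<open>0 < y\<close> \<open>y \<le> sum_list r\<close> by linarith
      then show ?thesis ..
    qed }
  then show ?thesis by (auto simp: L_def)
qed

lemma card_L: "card (L (m+1)) = 2 ^ (m div 2)"
proof (induction m rule: nat_less_induct)
  case (1 m)
  show ?case
  proof (cases "m < 2")
    case True
    then have "m = 0 \<or> m = 1" by auto
    have a: "card (L 1) = 1" "card (L 2) = 1" by (simp only: L1 L2, simp)+
    show ?thesis
    proof (cases "m = 0")
      case True then show ?thesis using a(1) by simp
    next
      case False
      then have "m = 1" using \<open>m = 0 \<or> m = 1\<close> by simp
      then have "card (L (m+1)) = 1" using a(2) by (metis one_add_one)
      then show ?thesis using \<open>m = 1\<close> by simp
    qed
  next
    case False
    then obtain k where k: "m = k + 2" by (metis add.commute le_Suc_ex not_less)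
    then have "card (L (m+1)) = 2 * card (L (k+1))" using card_L_step[of "k+1"] by (simp add: add.commute add.left_commute)
    then show ?thesis using 1 k by simp
  qed
qed

lemma CI1: "card (CI 1) = 1"
proof -
  have "CI 1 = {[1]}"
  proof -
    { fix cs assume "cs \<in> CI 1"
      then obtain x r where "cs = x # r" "0 < x" "\<forall>c\<in>set r. 0 < c" "x + sum_list r = 1"
        by (cases cs) (auto simp: CI_def)
      then have "cs = [1]" using pos_sum[of r] by fastforce }
    then show ?thesis by (auto simp: CI_def)
  qed
  then show ?thesis by simp
qed

lemma d_eq_c: "d n = c_ie n"
proof (induction n rule: nat_less_induct)
  case (1 n)
  show ?case
  proof (cases "n < 2")
    case True
    then have "n = 0 \<or> n = 1" by auto
    have c: "c_ie 0 = 1" "c_ie 1 = 1" by (simp_all only: c_ie_def C_ie_CI CI1 CI0, simp)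
    show ?thesis
    proof (cases "n = 0")
      case True then show ?thesis using c d0 by simp
    next
      case False
      then have "n = 1" using \<open>n = 0 \<or> n = 1\<close> by simp
      then show ?thesis using c d1 by simp
    qed
  next
    case False
    then obtain k where k: "n = k + 2" by (metis add.commute le_Suc_ex not_less)
    have "c_ie n = c_ie (k+1) + card (L (k+1))"
      using card_CI_step[of "k+1"] k by (simp add: c_ie_def C_ie_CI add.commute add.left_commute)
    also have "\<dots> = d (k+1) + 2 ^ (k div 2)" using 1 k card_L[of k] by simp
    also have "\<dots> = d n" using d_step[of k] k by simp
    finally show ?thesis by simp
  qed
qed


lemma d2: "d 2 = 2"
proof -
  have "d (0+2) = d (0+1) + 2^(0 div 2)" by (rule d_step)
  then show ?thesis using d1 by (metis add_0 div_0 power_0 one_add_one)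
qed

lemma d3: "d 3 = 3"
proof -
  have "d (1+2) = d (1+1) + 2^(1 div 2)" by (rule d_step)
  moreover have "(1::nat)+2 = 3" "(1::nat)+1 = 2" "(2::nat)^(1 div 2) = 1" by simp_all
  ultimately have "d 3 = d 2 + 1" by (simp only:)
  then show ?thesis using d2 by simp
qed

lemma d_closed: "d (2*j+1) = 2^(j+1) - 1 \<and> d (2*j+2) = 3*2^j - 1"
proof (induction j)
  case 0
  have "2*0+1 = (1::nat)" "2*0+2 = (2::nat)" "(2::nat)^(0+1) - 1 = 1" "3*(2::nat)^0 - 1 = 2" by simp_all
  then show ?case using d1 d2 by (simp only:)
next
  case (Suc j)
  define A where "A = (2::nat)^j"
  have p: "1 \<le> A" unfolding A_def by simp
  have IH2: "d (2*j+2) = 3*A - 1" unfolding A_def using Suc.IH by (rule conjunct2)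
  have e1: "(2*j+1) div 2 = j" by presburger
  have e2: "(2*j+2) div 2 = Suc j" by presburger
  have a: "d (2*Suc j+1) = d (2*j+2) + A"
  proof -
    have "d ((2*j+1)+2) = d ((2*j+1)+1) + 2^((2*j+1) div 2)" by (rule d_step)
    moreover have "(2*j+1)+2 = 2*Suc j+1" "(2*j+1)+1 = 2*j+2" by simp_all
    ultimately show ?thesis unfolding e1 A_def by simp
  qed
  have b: "d (2*Suc j+2) = d (2*Suc j+1) + 2*A"
  proof -
    have "d ((2*j+2)+2) = d ((2*j+2)+1) + 2^((2*j+2) div 2)" by (rule d_step)
    moreover have "(2*j+2)+2 = 2*Suc j+2" "(2*j+2)+1 = 2*Suc j+1" by simp_all
    moreover have "(2::nat)^((2*j+2) div 2) = 2*A" unfolding e2 A_def by simp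
    ultimately show ?thesis by simp
  qed
  have r1: "d (2*Suc j+1) = 4*A - 1" using a IH2 p by linarith
  have r2: "d (2*Suc j+2) = 6*A - 1" using b r1 p by linarith
  have q1: "(2::nat)^(Suc j+1) = 4*A" unfolding A_def by simp
  have q2: "3*(2::nat)^(Suc j) = 6*A" unfolding A_def by simp
  show ?case unfolding q1 q2 using r1 r2 by simp
qed

definition Den :: "rat fps" where "Den = 1 - fps_X - 2 * fps_X ^ 2 + 2 * fps_X ^ 3"
definition Num :: "rat fps" where "Num = 1 - fps_X ^ 2 + fps_X ^ 3"


lemma drat_step: "(of_nat (d (k+2)) :: rat) = of_nat (d (k+1)) + 2 ^ (k div 2)"
  using d_step[of k] by simp

lemma prod_eq: "Abs_fps (\<lambda>n. of_nat (d n) :: rat) * Den = Num"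
proof (rule fps_ext)
  fix n
  let ?a = "Abs_fps (\<lambda>n. of_nat (d n) :: rat)"
  have e: "?a * Den = ?a - fps_X^1 * ?a - (fps_X^2 * ?a + fps_X^2 * ?a) + (fps_X^3 * ?a + fps_X^3 * ?a)"
  proof -
    have "(2::rat fps) * fps_X ^ 2 = fps_X^2 + fps_X^2" "(2::rat fps) * fps_X ^ 3 = fps_X^3 + fps_X^3" by (rule mult_2)+
    then show ?thesis unfolding Den_def by (simp only: ring_distribs mult_1_right power_one_right mult.commute[of ?a])
  qed
  have c: "fps_nth (?a * Den) n = of_nat (d n) - (if n < 1 then 0 else of_nat (d (n-1)))
       - 2 * (if n < 2 then 0 else of_nat (d (n-2))) + 2 * (if n < 3 then 0 else of_nat (d (n-3)))"
    unfolding e by (simp only: fps_sub_nth fps_add_nth fps_X_power_mult_nth) simp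
  have nn: "fps_nth Num n = (if n = 0 then 1 else 0) - (if n = 2 then 1 else 0) + (if n = 3 then 1 else 0)"
    unfolding Num_def by simp
  have cs: "n = 0 \<or> n = 1 \<or> n = 2 \<or> n = 3 \<or> (\<exists>k. n = k + 4)" by presburger
  consider "n = 0" | "n = 1" | "n = 2" | "n = 3" | k where "n = k + 4" using cs by blast
  then show "fps_nth (?a * Den) n = fps_nth Num n"
  proof cases
    case 1 then show ?thesis using c nn d0 by simp
  next
    case 2 then show ?thesis using c nn d0 d1 by simp
  next
    case 3
    show ?thesis using c nn d0 d1 d2 3 by simp
  next
    case 4
    have "d 2 = 2" by (rule d2)
    moreover have "d 3 = 3" by (rule d3)
    ultimately show ?thesis using c nn d0 d1 4 by simp
  next
    case 5
    have s1: "(of_nat (d (k+4)) :: rat) = of_nat (d (k+3)) + 2 ^ ((k+2) div 2)"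
    proof -
      have "(of_nat (d ((k+2)+2))::rat) = of_nat (d ((k+2)+1)) + 2^((k+2) div 2)" by (rule drat_step)
      moreover have "(k+2)+2 = k+4" "(k+2)+1 = k+3" by simp_all
      ultimately show ?thesis by (simp only:)
    qed
    have s2: "(of_nat (d (k+2)) :: rat) = of_nat (d (k+1)) + 2 ^ (k div 2)"
      using drat_step[of k] by simp
    have s3: "(2::rat) ^ ((k+2) div 2) = 2 * 2 ^ (k div 2)" by simp
    have "fps_nth (?a * Den) n = of_nat (d (k+4)) - of_nat (d (k+3)) - 2 * of_nat (d (k+2)) + 2 * of_nat (d (k+1))"
    proof -
      have h: "k+4-1 = k+3" "k+4-2 = k+2" "k+4-3 = k+1" "(k+4 < 1) = False" "(k+4<2) = False" "(k+4<3) = False" by simp_all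
      show ?thesis using c unfolding 5 h if_False by (simp only:)
    qed
    also have "\<dots> = 0" using s1 s2 s3 by simp
    finally show ?thesis using nn 5 by simp
  qed
qed

lemma fps_part: "Abs_fps (\<lambda>n. of_nat (d n) :: rat)
        = (1 - fps_X ^ 2 + fps_X ^ 3) / (1 - fps_X - 2 * fps_X ^ 2 + 2 * fps_X ^ 3)"
proof -
  let ?a = "Abs_fps (\<lambda>n. of_nat (d n) :: rat)"
  have n0: "fps_nth Num 0 = 1" unfolding Num_def by simp
  have nz: "Den \<noteq> 0"
  proof
    assume "Den = 0"
    then have "Num = 0" using prod_eq by simp
    then show False using n0 by simp
  qed
  have "?a = (?a * Den) / Den" by (rule fps_divide_times_eq[OF nz, symmetric])
  also have "\<dots> = Num / Den" unfolding prod_eq ..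
  finally show ?thesis unfolding Num_def Den_def .
qed

theorem theorem2p5:
  shows "(\<forall>n. d n = c_ie n)
    \<and> Abs_fps (\<lambda>n. of_nat (d n) :: rat)
        = (1 - fps_X ^ 2 + fps_X ^ 3) / (1 - fps_X - 2 * fps_X ^ 2 + 2 * fps_X ^ 3)
    \<and> (\<forall>m::nat. m \<ge> 1 \<longrightarrow> d (2 * m - 1) = 2 ^ m - 1)
    \<and> (\<forall>m::nat. m \<ge> 1 \<longrightarrow> d (2 * m) = 3 * 2 ^ (m - 1) - 1)"
proof (intro conjI allI impI)
  fix n show "d n = c_ie n" by (rule d_eq_c)
next
  show "Abs_fps (\<lambda>n. of_nat (d n) :: rat)
        = (1 - fps_X ^ 2 + fps_X ^ 3) / (1 - fps_X - 2 * fps_X ^ 2 + 2 * fps_X ^ 3)" by (rule fps_part)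
next
  fix m :: nat assume "m \<ge> 1"
  then obtain j where j: "m = Suc j" by (cases m) auto
  have "2 * m - 1 = 2*j+1" "(2::nat) ^ m = 2^(j+1)" using j by simp_all
  then show "d (2 * m - 1) = 2 ^ m - 1" using d_closed[of j] by (simp only:)
next
  fix m :: nat assume "m \<ge> 1"
  then obtain j where j: "m = Suc j" by (cases m) auto
  have "2 * m = 2*j+2" "m - 1 = j" using j by simp_all
  then show "d (2 * m) = 3 * 2 ^ (m - 1) - 1" using d_closed[of j] by (simp only:)
qed

end
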